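(* For any closed $k$-subspace $W\subset k[z_1^{-1}]((z_2))$ with $\mathrm{Supp}(W)=W_0:=k[z_1^{-1},z_2^{-1}]$ there exists a unique operator $S=1+S^-$ with $S^-\in\hat D_1[[\partial_2^{-1}]]\partial_2^{-1}$ such that $W_0S=W$.
   Context: $k$ is a field of characteristic zero, $R=k[[x_1,x_2]]$, $M=(x_1,x_2)$, $\mathrm{ord}_M(a)=\sup\{n:a\in M^n\}$, $\partial_i=\partial/\partial x_i$. $\hat D_1$ is the ring of formal series $\sum_{q\ge0}a_q\partial_1^q$, $a_q\in R$, with $\mathrm{ord}_M(a_q)\to\infty$ as $q\to\infty$ (multiplication by the Leibniz rule). $\hat E_+=\hat D_1((\partial_2^{-1}))$ is the ring of formal Laurent series in $\partial_2^{-1}$ with coefficients in $\hat D_1$ written on the left, multiplied by the Leibniz rule $\partial_2^{n}a=\sum_{j\ge0}\binom{n}{j}\partial_2^j(a)\partial_2^{n-j}$ ($n\in\mathbb Z$); $\hat D_1[[\partial_2^{-1}]]\partial_2^{-1}\subset\hat E_+$. The space $k[z_1^{-1}]((z_2))$ is a right $\hat E_+$-module via $\hat E_+/(x_1\hat E_++x_2\hat E_+)\simeq k[z_1^{-1}]((z_2))$, the class of $p\,\partial_1^i\partial_2^j$ ($p\in R$) corresponding to $p(0,0)z_1^{-i}z_2^{-j}$. On $\mathbb Z^2$ use the anti-lexicographic order: $(a,b)<(c,d)$ iff $b<d$, or $b=d$ and $a<c$. For $0\ne v=\sum v_{ij}z_1^iz_2^j$, its lowest term $\mathrm{LT}(v)$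 is the term $v_{ij}z_1^iz_2^j$, $v_{ij}\ne0$, with minimal $(i,j)$. The support $\mathrm{Supp}(W)$ of a subspace $W$ is the closed subspace (in the two-dimensional local field topology of $k((z_1))((z_2))$) generated by $\mathrm{LT}(a)$, $0\neq a\in W$; thus $\mathrm{Supp}(W)=W_0$ means the exponents of lowest terms of nonzero elements of $W$ are exactly the pairs $(-i,-j)$, $i,j\ge0$. *)

theory Defs
  imports Main "HOL-Library.Groups_Big_Fun"
begin

text \<open>
* R = k[[x1,x2]]: a power series is its coefficient function a :: nat => nat => 'k,
  a i j = coefficient of x1^i x2^j.
* An element of E+ = D1hat((d2^-1)) is P :: nat => int => (nat => nat => 'k),
  P q m = coefficient (in R, written on the left) of d1^q d2^m.
* An element of k((z1))((z2)) is v :: int => int => 'k, v i j = coefficient of z1^i z2^j.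
\<close>

type_synonym 'k pser = "nat \<Rightarrow> nat \<Rightarrow> 'k"
type_synonym 'k op = "nat \<Rightarrow> int \<Rightarrow> 'k pser"
type_synonym 'k ser2 = "int \<Rightarrow> int \<Rightarrow> 'k"

definition in_Mpow :: "('k::zero) pser \<Rightarrow> nat \<Rightarrow> bool" where
  "in_Mpow a n \<longleftrightarrow> (\<forall>i j. i + j < n \<longrightarrow> a i j = 0)"

definition ps_mult :: "('k::comm_ring_1) pser \<Rightarrow> 'k pser \<Rightarrow> 'k pser" where
  "ps_mult a b = (\<lambda>i j. \<Sum>i1\<le>i. \<Sum>j1\<le>j. a i1 j1 * b (i - i1) (j - j1))"

definition ps_deriv :: "nat \<Rightarrow> nat \<Rightarrow> ('k::comm_ring_1) pser \<Rightarrow> 'k pser" where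
  "ps_deriv al be a = (\<lambda>i j. pochhammer (of_nat (Suc i)) al * pochhammer (of_nat (Suc j)) be
                               * a (i + al) (j + be))"

definition is_D1hat :: "(nat \<Rightarrow> ('k::zero) pser) \<Rightarrow> bool" where
  "is_D1hat a \<longleftrightarrow> (\<forall>n. \<exists>Q. \<forall>q\<ge>Q. in_Mpow (a q) n)"

definition is_Eplus :: "('k::zero) op \<Rightarrow> bool" where
  "is_Eplus P \<longleftrightarrow> (\<exists>M. \<forall>m>M. \<forall>q. P q m = (\<lambda>_ _. 0)) \<and> (\<forall>m. is_D1hat (\<lambda>q. P q m))"

definition is_Sminus :: "('k::zero) op \<Rightarrow> bool" where
  "is_Sminus P \<longleftrightarrow> is_Eplus P \<and> (\<forall>q m. m \<ge> 0 \<longrightarrow> P q m = (\<lambda>_ _. 0))"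

definition E_one :: "('k::{zero,one}) op" where
  "E_one = (\<lambda>q m i j. if q = 0 \<and> m = 0 \<and> i = 0 \<and> j = 0 then 1 else 0)"

definition E_add :: "('k::plus) op \<Rightarrow> 'k op \<Rightarrow> 'k op" where
  "E_add P Q = (\<lambda>q m i j. P q m i j + Q q m i j)"

text \<open>Product in E+ by the Leibniz rule:
  (a d1^q d2^m)(b d1^r d2^n) = sum_{al,be} C(q,al) C(m,be) a (d1^al d2^be b) d1^(q-al+r) d2^(m-be+n).
  For elements of E+ the sum defining each coefficient is finite.\<close>
definition E_mult :: "('k::field_char_0) op \<Rightarrow> 'k op \<Rightarrow> 'k op" where
  "E_mult P Q = (\<lambda>s t i j.
     Sum_any (\<lambda>(q::nat, m::int, r::nat, n::int, al::nat, be::nat).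
       if al \<le> q \<and> q - al + r = s \<and> m - int be + n = t
       then of_nat (q choose al) * ((of_int m :: 'k) gchoose be)
            * ps_mult (P q m) (ps_deriv al be (Q r n)) i j
       else 0))"

definition L2 :: "('k::zero) ser2 set" where
  "L2 = {v. (\<exists>N. \<forall>j<N. \<forall>i. v i j = 0) \<and> (\<forall>j. \<exists>M. \<forall>i<M. v i j = 0)}"

definition Vsp :: "('k::zero) ser2 set" where
  "Vsp = {v. (\<forall>i j. i > 0 \<longrightarrow> v i j = 0) \<and> (\<exists>N. \<forall>j<N. \<forall>i. v i j = 0)
             \<and> (\<forall>j. finite {i. v i j \<noteq> 0})}"

definition W0 :: "('k::zero) ser2 set" where
  "W0 = {v. finite {(i, j). v i j \<noteq> 0} \<and> (\<forall>i j. v i j \<noteq> 0 \<longrightarrow> i \<le> 0 \<and> j \<le> 0)}"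

text \<open>the isomorphism E+/(x1 E+ + x2 E+) = k[z1^-1]((z2)): class of p d1^q d2^m
  goes to p(0,0) z1^-q z2^-m\<close>
definition res :: "('k::zero) op \<Rightarrow> 'k ser2" where
  "res P = (\<lambda>i j. if i \<le> 0 then P (nat (- i)) (- j) 0 0 else 0)"

text \<open>the representative of v with constant coefficients\<close>
definition lift :: "('k::zero) ser2 \<Rightarrow> 'k op" where
  "lift v = (\<lambda>q m i j. if i = 0 \<and> j = 0 then v (- int q) (- m) else 0)"

text \<open>right action of E+ on k[z1^-1]((z2))\<close>
definition act :: "('k::field_char_0) ser2 \<Rightarrow> 'k op \<Rightarrow> 'k ser2" where
  "act v P = res (E_mult (lift v) P)"

definition subspace2 :: "('k::field) ser2 set \<Rightarrow> bool" where
  "subspace2 W \<longleftrightarrow> (\<lambda>_ _. 0) \<in> W \<and> (\<forall>v\<in>W. \<forall>w\<in>W. (\<lambda>i j. v i j + w i j) \<in> W)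
                    \<and> (\<forall>c. \<forall>v\<in>W. (\<lambda>i j. c * v i j) \<in> W)"

text \<open>Closedness in the two-dimensional local field topology of k((z1))((z2)) (k discrete),
  restricted to k[z1^-1]((z2)).  Basic neighbourhoods of 0 are
  {x. \<forall>j<N. \<forall>i<n j. x i j = 0} for N :: int, n :: int => int.\<close>
definition closed2 :: "('k::zero) ser2 set \<Rightarrow> bool" where
  "closed2 W \<longleftrightarrow> (\<forall>x\<in>Vsp. (\<forall>N (n::int \<Rightarrow> int). \<exists>w\<in>W. \<forall>j<N. \<forall>i<n j. x i j = w i j) \<longrightarrow> x \<in> W)"

definition lt_exp :: "('k::zero) ser2 \<Rightarrow> int \<times> int" where
  "lt_exp v = (THE (i, j). v i j \<noteq> 0 \<and>
                 (\<forall>i' j'. v i' j' \<noteq> 0 \<longrightarrow> j < j' \<or> (j = j' \<and> i \<le> i')))"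

text \<open>Supp(W): the closed subspace of k((z1))((z2)) generated by the lowest terms of
  nonzero elements of W, i.e. all series supported on the set of lowest-term exponents.\<close>
definition Supp :: "('k::zero) ser2 set \<Rightarrow> 'k ser2 set" where
  "Supp W = {f \<in> L2. \<forall>i j. f i j \<noteq> 0 \<longrightarrow> (i, j) \<in> lt_exp ` (W - {\<lambda>_ _. 0})}"

end

theory Submission
  imports Defs
begin



definition monoU :: "nat \<Rightarrow> nat \<Rightarrow> ('k::field_char_0) op \<Rightarrow> 'k ser2" where
"monoU a b Q = (\<lambda>i j. if i \<le> 0 then (\<Sum>al\<le>a. \<Sum>be\<le>b. if a \<le> nat (-i) + al then
   of_nat (a choose al) * of_nat (b choose be) * (fact al * fact be * Q (nat (-i) + al - a) (- j - int b + int be) al be) else 0) else 0)"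

lemma act_eq:
  fixes v :: "('k::field_char_0) ser2"
  assumes v: "v \<in> W0" and F: "finite F" "\<And>a b. v (-int a) (-int b) \<noteq> 0 \<Longrightarrow> (a,b) \<in> F"
  shows "act v Q i j = (\<Sum>(a,b)\<in>F. v (-int a) (-int b) * monoU a b Q i j)"
proof (cases "i \<le> 0")
  case False
  then show ?thesis by (simp add: act_def res_def monoU_def)
next
  case True
  define s where "s = nat (-i)"
  define t where "t = -j"
  define h where "h = (\<lambda>(q::nat, m::int, r::nat, n::int, al::nat, be::nat).
       if al \<le> q \<and> q - al + r = s \<and> m - int be + n = t
       then of_nat (q choose al) * ((of_int m :: 'k) gchoose be)
            * ps_mult (lift v q m) (ps_deriv al be (Q r n)) 0 0
       else 0)"
  have lhs: "act v Q i j = Sum_any h"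
    using True by (simp add: act_def res_def E_mult_def h_def s_def t_def)
  define D where "D = Sigma F (\<lambda>(a,b). {..a} \<times> {..b})"
  define g where "g = (\<lambda>((a::nat,b::nat),(al::nat,be::nat)). (a, int b, s + al - a, t - int b + int be, al, be))"
  have finD: "finite D" unfolding D_def using F(1) by (auto intro!: finite_SigmaI)
  have injg: "inj_on g D" unfolding inj_on_def g_def D_def by auto
  have hval: "h (q,m,r,n,al,be) = (if al \<le> q \<and> q - al + r = s \<and> m - int be + n = t
       then of_nat (q choose al) * ((of_int m :: 'k) gchoose be)
            * (v (- int q) (- m) * (fact al * fact be * Q r n al be)) else 0)" for q m r n al be
    by (simp add: h_def ps_mult_def lift_def ps_deriv_def pochhammer_fact)
  have sub: "{x. h x \<noteq> 0} \<subseteq> g ` D"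
  proof
    fix x assume "x \<in> {x. h x \<noteq> 0}"
    then obtain q m r n al be where x: "x = (q,m,r,n,al,be)" and hx: "h (q,m,r,n,al,be) \<noteq> 0"
      by (cases x) auto
    from hx have c: "al \<le> q" "q - al + r = s" "m - int be + n = t"
      and vn: "v (- int q) (- m) \<noteq> 0" and gb: "((of_int m :: 'k) gchoose be) \<noteq> 0"
      by (auto simp: hval split: if_splits)
    from vn v have "- m \<le> 0" unfolding W0_def by blast
    then obtain b where mb: "m = int b" by (metis add.inverse_inverse neg_0_le_iff_le nonneg_int_cases)
    have "(q,b) \<in> F" using F(2) vn mb by auto
    have "be \<le> b"
    proof (rule ccontr)
      assume "\<not> be \<le> b"
      then have "(of_nat b :: 'k) gchoose be = 0"
        by (metis binomial_eq_0 binomial_gbinomial not_le of_nat_0)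
      then show False using gb mb by simp
    qed
    have "x = g ((q,b),(al,be))" using x c mb by (auto simp: g_def)
    moreover have "((q,b),(al,be)) \<in> D" using \<open>(q,b) \<in> F\<close> c \<open>be \<le> b\<close> by (auto simp: D_def)
    ultimately show "x \<in> g ` D" by blast
  qed
  have "Sum_any h = sum h (g ` D)"
    by (rule Sum_any.expand_superset[OF finite_imageI[OF finD] sub])
  also have "\<dots> = sum (h \<circ> g) D" by (rule sum.reindex[OF injg])
  also have "\<dots> = (\<Sum>p\<in>F. \<Sum>y\<in>{..fst p} \<times> {..snd p}. (h \<circ> g) (p,y))"
    unfolding D_def using F(1) by (subst sum.Sigma) (auto simp: split_def)
  also have "\<dots> = (\<Sum>(a,b)\<in>F. \<Sum>(al,be)\<in>{..a} \<times> {..b}. (h \<circ> g) ((a,b),(al,be)))"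
    by (simp add: split_def)
  also have "\<dots> = (\<Sum>(a,b)\<in>F. v (-int a) (-int b) * monoU a b Q i j)"
  proof (rule sum.cong[OF refl], clarify)
    fix a b
    have "(\<Sum>(al,be)\<in>{..a} \<times> {..b}. (h \<circ> g) ((a,b),(al,be)))
      = (\<Sum>al\<le>a. \<Sum>be\<le>b. (h \<circ> g) ((a,b),(al,be)))"
      by (simp add: sum.cartesian_product)
    also have "\<dots> = (\<Sum>al\<le>a. \<Sum>be\<le>b. v (-int a) (-int b) * (if a \<le> nat (-i) + al then
      of_nat (a choose al) * of_nat (b choose be) * (fact al * fact be * Q (nat (-i) + al - a) (- j - int b + int be) al be) else 0))"
    proof (intro sum.cong refl)
      fix al be assume "al \<in> {..a}" "be \<in> {..b}"
      then show "(h \<circ> g) ((a,b),(al,be)) = v (-int a) (-int b) * (if a \<le> nat (-i) + al then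
      of_nat (a choose al) * of_nat (b choose be) * (fact al * fact be * Q (nat (-i) + al - a) (- j - int b + int be) al be) else 0)"
        by (auto simp: g_def hval s_def t_def binomial_gbinomial algebra_simps)
    qed
    also have "\<dots> = v (-int a) (-int b) * monoU a b Q i j"
      using True by (simp add: monoU_def sum_distrib_left)
    finally show "(\<Sum>(al,be)\<in>{..a} \<times> {..b}. (h \<circ> g) ((a,b),(al,be))) = v (-int a) (-int b) * monoU a b Q i j" .
  qed
  finally show ?thesis using lhs by simp
qed




definition ismin :: "('k::zero) ser2 \<Rightarrow> int \<Rightarrow> int \<Rightarrow> bool" where
  "ismin v i j \<longleftrightarrow> v i j \<noteq> 0 \<and> (\<forall>i' j'. v i' j' \<noteq> 0 \<longrightarrow> j < j' \<or> (j = j' \<and> i \<le> i'))"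

lemma Vsp_lin:
  fixes x y :: "('k::field) ser2"
  assumes "x \<in> Vsp" "y \<in> Vsp"
  shows "(\<lambda>i j. c * x i j + d * y i j) \<in> Vsp"
proof -
  from assms obtain N1 N2 where n1: "\<forall>j<N1. \<forall>i. x i j = 0" and n2: "\<forall>j<N2. \<forall>i. y i j = 0"
    unfolding Vsp_def by blast
  have "\<forall>j<min N1 N2. \<forall>i. c * x i j + d * y i j = 0" using n1 n2 by simp
  moreover have "finite {i. c * x i j + d * y i j \<noteq> 0}" for j
  proof -
    have "{i. c * x i j + d * y i j \<noteq> 0} \<subseteq> {i. x i j \<noteq> 0} \<union> {i. y i j \<noteq> 0}" by auto
    moreover have "finite ({i. x i j \<noteq> 0} \<union> {i. y i j \<noteq> 0})" using assms unfolding Vsp_def by auto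
    ultimately show ?thesis by (rule finite_subset)
  qed
  moreover have "\<forall>i j. i > 0 \<longrightarrow> c * x i j + d * y i j = 0" using assms unfolding Vsp_def by auto
  ultimately show ?thesis unfolding Vsp_def by blast
qed

lemma min_exists:
  fixes v :: "('k::zero) ser2"
  assumes "v \<in> Vsp" "v i0 j0 \<noteq> 0"
  shows "\<exists>i j. ismin v i j \<and> j \<le> j0"
proof -
  from assms obtain N where N: "\<forall>j<N. \<forall>i. v i j = 0" unfolding Vsp_def by blast
  have j0N: "j0 \<ge> N" using N assms(2) by force
  define P where "P = (\<lambda>k::nat. \<exists>i. v i (N + int k) \<noteq> 0)"
  have P0: "P (nat (j0 - N))" using assms(2) j0N by (auto simp: P_def)
  define k0 where "k0 = (LEAST k. P k)"
  have Pk0: "P k0" unfolding k0_def by (rule LeastI[of P, OF P0])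
  define j where "j = N + int k0"
  have k0le: "k0 \<le> nat (j0 - N)" unfolding k0_def by (rule Least_le[of P, OF P0])
  define I where "I = {i. v i j \<noteq> 0}"
  have finI: "finite I" using assms(1) unfolding Vsp_def I_def by blast
  have neI: "I \<noteq> {}" using Pk0 by (auto simp: P_def I_def j_def)
  define i where "i = Min I"
  have "v i j \<noteq> 0" using Min_in[OF finI neI] by (simp add: i_def I_def)
  moreover have "j < j' \<or> (j = j' \<and> i \<le> i')" if "v i' j' \<noteq> 0" for i' j'
  proof -
    have "j' \<ge> N" using N that by force
    then have "P (nat (j' - N))" using that by (auto simp: P_def)
    then have "k0 \<le> nat (j' - N)" unfolding k0_def by (rule Least_le[of P])
    then have "j \<le> j'" using \<open>j' \<ge> N\<close> by (simp add: j_def)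
    moreover have "j = j' \<Longrightarrow> i \<le> i'" using that finI by (auto simp: i_def I_def)
    ultimately show ?thesis by auto
  qed
  ultimately have "ismin v i j" by (simp add: ismin_def)
  moreover have "j \<le> j0" using k0le j0N by (simp add: j_def)
  ultimately show ?thesis by blast
qed

lemma ismin_unique: "ismin v i j \<Longrightarrow> ismin v i' j' \<Longrightarrow> i = i' \<and> j = j'"
proof -
  assume a: "ismin v i j" "ismin v i' j'"
  then have "j < j' \<or> (j = j' \<and> i \<le> i')" "j' < j \<or> (j' = j \<and> i' \<le> i)"
    unfolding ismin_def by blast+
  then show ?thesis by auto
qed

lemma lt_exp_eq: "ismin v i j \<Longrightarrow> lt_exp v = (i, j)"
  unfolding lt_exp_def
  apply (rule the_equality)
   apply (simp add: ismin_def)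
  apply (clarsimp)
  subgoal for a b using ismin_unique[of v i j a b] by (simp add: ismin_def)
  done

lemma nonzero_ex: "v \<noteq> (\<lambda>_ _. 0) \<Longrightarrow> \<exists>i j. v i j \<noteq> 0" by (meson ext)

lemma Supp_K1:
  fixes W :: "('k::field_char_0) ser2 set"
  assumes "W \<subseteq> Vsp" "Supp W = W0" "w \<in> W" "ismin w i j"
  shows "i \<le> 0 \<and> j \<le> 0"
proof -
  have wn: "w \<noteq> (\<lambda>_ _. 0)" using assms(4) by (auto simp: ismin_def)
  define f :: "'k ser2" where "f = (\<lambda>i' j'. if i' = i \<and> j' = j then 1 else 0)"
  have "\<forall>j'<j. \<forall>i'. f i' j' = 0" "\<forall>j'. \<forall>i'<i. f i' j' = 0" by (auto simp: f_def)
  then have "f \<in> L2" unfolding L2_def by blast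
  moreover have "(i,j) \<in> lt_exp ` (W - {\<lambda>_ _. 0})"
    using lt_exp_eq[OF assms(4)] assms(3) wn by force
  ultimately have "f \<in> Supp W" unfolding Supp_def f_def by auto
  then have "f \<in> W0" using assms(2) by simp
  then have "\<forall>i' j'. f i' j' \<noteq> 0 \<longrightarrow> i' \<le> 0 \<and> j' \<le> 0" unfolding W0_def by blast
  then show ?thesis by (auto simp: f_def)
qed

lemma Supp_K2:
  fixes W :: "('k::field_char_0) ser2 set"
  assumes "W \<subseteq> Vsp" "Supp W = W0" "i \<le> 0" "j \<le> 0"
  shows "\<exists>w\<in>W. ismin w i j"
proof -
  define f :: "'k ser2" where "f = (\<lambda>i' j'. if i' = i \<and> j' = j then 1 else 0)"
  have "{(i', j'). f i' j' \<noteq> 0} = {(i,j)}" by (auto simp: f_def)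
  then have "f \<in> W0" unfolding W0_def using assms(3,4) by (auto simp: f_def)
  then have "f \<in> Supp W" using assms(2) by simp
  then have "(i,j) \<in> lt_exp ` (W - {\<lambda>_ _. 0})" unfolding Supp_def f_def by auto
  then obtain w where w0: "w \<in> W - {\<lambda>_ _. 0}" "(i,j) = lt_exp w" by blast
  then have w: "w \<in> W" "w \<noteq> (\<lambda>_ _. 0)" "lt_exp w = (i,j)" by auto
  obtain i0 j0 where "w i0 j0 \<noteq> 0" using nonzero_ex[OF w(2)] by blast
  then obtain i' j' where m: "ismin w i' j'" using min_exists assms(1) w(1) by blast
  then have "(i',j') = (i,j)" using lt_exp_eq w(3) by metis
  then show ?thesis using m w(1) by auto
qed

lemma quad_induct:
  fixes P :: "('k::zero) ser2 \<Rightarrow> bool" and x :: "'k ser2"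
  assumes base: "\<And>x. x \<in> Vsp \<Longrightarrow> (\<forall>i j. x i j \<noteq> 0 \<longrightarrow> j > 0) \<Longrightarrow> P x"
  and step: "\<And>x i j. x \<in> Vsp \<Longrightarrow> i \<le> 0 \<Longrightarrow> j \<le> 0 \<Longrightarrow> ismin x i j \<Longrightarrow>
      (\<And>y. y \<in> Vsp \<Longrightarrow> (\<forall>i' j'. y i' j' \<noteq> 0 \<longrightarrow> j < j' \<or> (j = j' \<and> i < i')) \<Longrightarrow> P y) \<Longrightarrow> P x"
  and x: "x \<in> Vsp"
  shows "P x"
proof -
  define R where "R = inv_image (less_than <*lex*> less_than) (\<lambda>(i::int,j::int). (nat (-j), nat (-i)))"
  have wfR: "wf R" unfolding R_def by (intro wf_inv_image wf_lex_prod wf_less_than)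
  have main: "\<forall>x\<in>(Vsp :: 'k ser2 set). ismin x (fst p) (snd p) \<longrightarrow> snd p \<le> 0 \<longrightarrow> P x" for p :: "int \<times> int"
    using wfR
  proof (induction p rule: wf_induct_rule)
    case (less p)
    obtain i j where p: "p = (i,j)" by (cases p)
    show ?case
    proof (intro ballI impI)
      fix z :: "'k ser2" assume xV: "z \<in> Vsp" and m: "ismin z (fst p) (snd p)" and j0: "snd p \<le> 0"
      have "z i j \<noteq> 0" using m p by (simp add: ismin_def)
      then have i0: "i \<le> 0" using xV unfolding Vsp_def by force
      show "P z"
      proof (rule step[OF xV i0 _ ])
        show "j \<le> 0" "ismin z i j" using j0 m p by auto
        fix y :: "'k ser2" assume yV: "y \<in> Vsp" and yb: "\<forall>i' j'. y i' j' \<noteq> 0 \<longrightarrow> j < j' \<or> (j = j' \<and> i < i')"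
        show "P y"
        proof (cases "\<forall>i j. y i j \<noteq> 0 \<longrightarrow> j > 0")
          case True then show ?thesis using base yV by blast
        next
          case False
          then obtain i1 j1 where y1: "y i1 j1 \<noteq> 0" "j1 \<le> 0" by force
          obtain i2 j2 where m2: "ismin y i2 j2" "j2 \<le> j1" using min_exists[OF yV y1(1)] by blast
          have "y i2 j2 \<noteq> 0" using m2 by (simp add: ismin_def)
          then have i2: "i2 \<le> 0" using yV unfolding Vsp_def by force
          have "j < j2 \<or> (j = j2 \<and> i < i2)" using yb m2 by (simp add: ismin_def)
          moreover have "j \<le> 0" using j0 p by simp
          ultimately have "nat (-j2) < nat (-j) \<or> (nat (-j2) = nat (-j) \<and> nat (-i2) < nat (-i))"
            using i0 i2 m2(2) y1(2) by linarith
          then have "((i2,j2), p) \<in> R" using p by (simp add: R_def)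
          then have "\<forall>x\<in>Vsp. ismin x (fst (i2,j2)) (snd (i2,j2)) \<longrightarrow> snd (i2,j2) \<le> 0 \<longrightarrow> P x"
            by (rule less)
          then show ?thesis using m2 y1 yV by simp
        qed
      qed
    qed
  qed
  show ?thesis
  proof (cases "\<forall>i j. x i j \<noteq> 0 \<longrightarrow> j > 0")
    case True then show ?thesis using base x by blast
  next
    case False
    then obtain i1 j1 where y1: "x i1 j1 \<noteq> 0" "j1 \<le> 0" by force
    obtain i2 j2 where m2: "ismin x i2 j2" "j2 \<le> j1" using min_exists[OF x y1(1)] by blast
    then show ?thesis using main[of "(i2,j2)"] x y1 by simp
  qed
qed




definition dl :: "nat \<Rightarrow> nat \<Rightarrow> ('k::zero_neq_one) ser2" where
  "dl a b = (\<lambda>i j. if i = - int a \<and> j = - int b then 1 else 0)"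

definition toOp :: "(nat \<Rightarrow> nat \<Rightarrow> nat \<Rightarrow> int \<Rightarrow> 'k) \<Rightarrow> 'k op" where
  "toOp f = (\<lambda>r n i j. f i j r n)"

definition Gf :: "nat \<Rightarrow> nat \<Rightarrow> (nat \<Rightarrow> nat \<Rightarrow> nat \<Rightarrow> int \<Rightarrow> ('k::field_char_0)) \<Rightarrow> 'k ser2" where
"Gf a b f = (\<lambda>i j. if i \<le> 0 then (\<Sum>al\<le>a. \<Sum>be\<le>b. if (al,be) \<noteq> (a,b) \<and> a \<le> nat (-i) + al then
   of_nat (a choose al) * of_nat (b choose be) * (fact al * fact be * f al be (nat (-i) + al - a) (- j - int b + int be)) else 0) else 0)"

definition topT :: "nat \<Rightarrow> nat \<Rightarrow> (nat \<Rightarrow> nat \<Rightarrow> nat \<Rightarrow> int \<Rightarrow> ('k::field_char_0)) \<Rightarrow> 'k ser2" where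
"topT a b f = (\<lambda>i j. if i \<le> 0 then fact a * fact b * f a b (nat (-i)) (-j) else 0)"

lemma inner: "(\<Sum>be\<le>(b::nat). if be = b0 then (K::'k::comm_monoid_add) else 0) = (if b0 \<le> b then K else 0)"
  by (simp add: sum.delta)
lemma double_delta:
  fixes K :: "'k::comm_monoid_add" and a b a0 b0 :: nat
  shows "(\<Sum>al\<le>a. \<Sum>be\<le>b. if al = a0 \<and> be = b0 then K else 0) = (if a0 \<le> a \<and> b0 \<le> b then K else 0)"
proof -
  have "(\<Sum>al\<le>a. \<Sum>be\<le>b. if al = a0 \<and> be = b0 then K else 0)
      = (\<Sum>al\<le>(a::nat). if al = a0 then (if b0 \<le> (b::nat) then K else 0) else 0)"
  proof (intro sum.cong refl)
    fix al show "(\<Sum>be\<le>b. if al = a0 \<and> be = b0 then K else 0) = (if al = a0 then (if b0 \<le> b then K else 0) else 0)"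
      by (cases "al = a0") (simp_all add: inner)
  qed
  also have "\<dots> = (if a0 \<le> a \<and> b0 \<le> b then K else 0)"
    by (simp add: sum.delta)
  finally show ?thesis .
qed
lemma split_top:
  fixes X :: "nat \<Rightarrow> nat \<Rightarrow> 'k::comm_monoid_add"
  shows "(\<Sum>al\<le>a. \<Sum>be\<le>b. if c al then X al be else 0) = (\<Sum>al\<le>a. \<Sum>be\<le>b. if (al,be) \<noteq> (a,b) \<and> c al then X al be else 0) + (if c a then X a b else 0)"
proof -
  have "(\<Sum>al\<le>a. \<Sum>be\<le>b. if c al then X al be else 0) = (\<Sum>al\<le>a. \<Sum>be\<le>b. (if (al,be) \<noteq> (a,b) \<and> c al then X al be else 0) + (if al = a \<and> be = b then (if c a then X a b else 0) else 0))"
    by (intro sum.cong refl) auto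
  also have "\<dots> = (\<Sum>al\<le>a. \<Sum>be\<le>b. if (al,be) \<noteq> (a,b) \<and> c al then X al be else 0) + (if c a then X a b else 0)"
    by (simp only: sum.distrib double_delta) simp
  finally show ?thesis .
qed
lemma split_plus:
  fixes X Y :: "nat \<Rightarrow> nat \<Rightarrow> 'k::comm_monoid_add"
  shows "(\<Sum>al\<le>a. \<Sum>be\<le>b. if c al then X al be + Y al be else 0) = (\<Sum>al\<le>a. \<Sum>be\<le>b. if c al then X al be else 0) + (\<Sum>al\<le>a. \<Sum>be\<le>b. if c al then Y al be else 0)"
  by (simp add: sum.distrib[symmetric] if_distrib) (intro sum.cong refl, auto)
lemma mono_split: "monoU a b (toOp f) = (\<lambda>i j. Gf a b f i j + topT a b f i j)"
proof (intro ext)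
  fix i j :: int
  show "monoU a b (toOp f) i j = Gf a b f i j + topT a b f i j"
  proof (cases "i \<le> 0")
    case False then show ?thesis by (simp add: monoU_def Gf_def topT_def)
  next
    case True
    have "monoU a b (toOp f) i j = (\<Sum>al\<le>a. \<Sum>be\<le>b. if a \<le> nat (-i) + al then
      of_nat (a choose al) * of_nat (b choose be) * (fact al * fact be * f al be (nat (-i) + al - a) (- j - int b + int be)) else 0)"
      using True by (simp add: monoU_def toOp_def)
    also have "\<dots> = (\<Sum>al\<le>a. \<Sum>be\<le>b. if (al,be) \<noteq> (a,b) \<and> a \<le> nat (-i) + al then
      of_nat (a choose al) * of_nat (b choose be) * (fact al * fact be * f al be (nat (-i) + al - a) (- j - int b + int be)) else 0)
      + (if a \<le> nat (-i) + a then of_nat (a choose a) * of_nat (b choose b) * (fact a * fact b * f a b (nat (-i) + a - a) (- j - int b + int b)) else 0)"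
      by (rule split_top)
    also have "\<dots> = Gf a b f i j + topT a b f i j"
      using True by (simp add: Gf_def topT_def)
    finally show ?thesis .
  qed
qed

lemma mono_add_one:
  fixes Q :: "('k::field_char_0) op"
  shows "monoU a b (E_add E_one Q) = (\<lambda>i j. dl a b i j + monoU a b Q i j)"
proof (intro ext)
  fix i j :: int
  show "monoU a b (E_add E_one Q) i j = dl a b i j + monoU a b Q i j"
  proof (cases "i \<le> 0")
    case False then show ?thesis by (simp add: monoU_def dl_def)
  next
    case True
    have eq: "\<And>al be. (if a \<le> nat (-i) + al then
      of_nat (a choose al) * of_nat (b choose be) * (fact al * fact be * E_one (nat (-i) + al - a) (- j - int b + int be) al be) else 0)
        = (if al = 0 \<and> be = 0 then (if i = - int a \<and> j = - int b then 1 else (0::'k)) else 0)"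
      using True by (auto simp: E_one_def)
    have "monoU a b (E_add E_one Q) i j = (\<Sum>al\<le>a. \<Sum>be\<le>b. if a \<le> nat (-i) + al then
      of_nat (a choose al) * of_nat (b choose be) * (fact al * fact be * E_one (nat (-i) + al - a) (- j - int b + int be) al be)
      + of_nat (a choose al) * of_nat (b choose be) * (fact al * fact be * Q (nat (-i) + al - a) (- j - int b + int be) al be) else 0)"
      unfolding monoU_def E_add_def using True
      apply simp
      apply (intro sum.cong refl)
      apply (simp only: distrib_left)
      done
    also have "\<dots> = (\<Sum>al\<le>a. \<Sum>be\<le>b. if a \<le> nat (-i) + al then
      of_nat (a choose al) * of_nat (b choose be) * (fact al * fact be * E_one (nat (-i) + al - a) (- j - int b + int be) al be) else 0)
      + (\<Sum>al\<le>a. \<Sum>be\<le>b. if a \<le> nat (-i) + al then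
      of_nat (a choose al) * of_nat (b choose be) * (fact al * fact be * Q (nat (-i) + al - a) (- j - int b + int be) al be) else 0)"
      by (rule split_plus)
    also have "(\<Sum>al\<le>a. \<Sum>be\<le>b. if a \<le> nat (-i) + al then
      of_nat (a choose al) * of_nat (b choose be) * (fact al * fact be * E_one (nat (-i) + al - a) (- j - int b + int be) al be) else 0)
      = (\<Sum>al\<le>a. \<Sum>be\<le>b. if al = 0 \<and> be = 0 then (if i = - int a \<and> j = - int b then 1 else 0) else 0)"
      using True by (intro sum.cong refl) (auto simp: E_one_def)
    also have "(\<Sum>al\<le>a. \<Sum>be\<le>b. if al = 0 \<and> be = 0 then (if i = - int a \<and> j = - int b then 1 else 0) else 0) = dl a b i j"
      by (simp add: double_delta dl_def)
    finally show ?thesis using True by (simp add: monoU_def)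
  qed
qed




lemma dl_W0: "(dl a b :: ('k::field_char_0) ser2) \<in> W0"
proof -
  have "{(i, j). (dl a b i j :: 'k) \<noteq> 0} = {(- int a, - int b)}" by (auto simp: dl_def)
  then show ?thesis unfolding W0_def by (auto simp: dl_def)
qed

lemma dl_Vsp: "(dl a b :: ('k::field_char_0) ser2) \<in> Vsp"
proof -
  have "finite {i. (dl a b i j :: 'k) \<noteq> 0}" for j
    by (rule finite_subset[of _ "{- int a}"]) (auto simp: dl_def)
  moreover have "\<forall>j< - int b. \<forall>i. (dl a b i j :: 'k) = 0" by (auto simp: dl_def)
  ultimately show ?thesis unfolding Vsp_def by (auto simp: dl_def)
qed

definition good :: "(nat \<Rightarrow> nat \<Rightarrow> nat \<Rightarrow> int \<Rightarrow> 'k::zero) \<Rightarrow> nat \<Rightarrow> nat \<Rightarrow> bool" where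
  "good f a b \<longleftrightarrow> (\<forall>r n. n \<ge> 0 \<longrightarrow> f a b r n = 0) \<and> (\<forall>n. finite {r. f a b r n \<noteq> 0})"

lemma Gf_cong:
  assumes "\<And>al be. al \<le> a \<Longrightarrow> be \<le> b \<Longrightarrow> al + be < a + b \<Longrightarrow> f al be = g al be"
  shows "Gf a b f = Gf a b g"
  unfolding Gf_def
  apply (rule ext)+
  apply (rule if_cong[OF refl])
   apply (rule sum.cong[OF refl])+
  using assms by auto

lemma Gf_supp:
  assumes g: "\<And>al be. al \<le> a \<Longrightarrow> be \<le> b \<Longrightarrow> (al,be) \<noteq> (a,b) \<Longrightarrow> good f al be"
    and nz: "Gf a b f i j \<noteq> 0"
  shows "i \<le> 0 \<and> j > - int b \<and> (\<exists>al\<le>a. \<exists>be\<le>b. (al,be) \<noteq> (a,b) \<and> a \<le> nat (-i) + al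
           \<and> f al be (nat (-i) + al - a) (- j - int b + int be) \<noteq> 0)"
proof -
  have i0: "i \<le> 0"
  proof (rule ccontr)
    assume "\<not> i \<le> 0" then have "Gf a b f i j = 0" by (simp add: Gf_def)
    then show False using nz by simp
  qed
  have "Gf a b f i j = (\<Sum>al\<le>a. \<Sum>be\<le>b. if (al,be) \<noteq> (a,b) \<and> a \<le> nat (-i) + al then
   of_nat (a choose al) * of_nat (b choose be) * (fact al * fact be * f al be (nat (-i) + al - a) (- j - int b + int be)) else 0)"
    using i0 unfolding Gf_def by simp
  with nz obtain al where al: "al \<in> {..a}" and nz1: "(\<Sum>be\<le>b. if (al,be) \<noteq> (a,b) \<and> a \<le> nat (-i) + al then
   of_nat (a choose al) * of_nat (b choose be) * (fact al * fact be * f al be (nat (-i) + al - a) (- j - int b + int be)) else 0) \<noteq> 0"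
    by (metis (no_types, lifting) sum.not_neutral_contains_not_neutral)
  from nz1 obtain be where be: "be \<in> {..b}" and nz2: "(if (al,be) \<noteq> (a,b) \<and> a \<le> nat (-i) + al then
   of_nat (a choose al) * of_nat (b choose be) * (fact al * fact be * f al be (nat (-i) + al - a) (- j - int b + int be)) else 0) \<noteq> 0"
    by (rule sum.not_neutral_contains_not_neutral)
  from nz2 have c: "(al,be) \<noteq> (a,b)" "a \<le> nat (-i) + al" by (meson)+
  from nz2 c have fnz: "f al be (nat (-i) + al - a) (- j - int b + int be) \<noteq> 0"
    by (metis mult_zero_right)
  have "good f al be" using g al be c by auto
  then have "- j - int b + int be < 0" using fnz unfolding good_def by (meson not_le)
  then have "j > - int b" by simp
  then show ?thesis using i0 al be c fnz by auto
qed

lemma Gf_Vsp: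
  fixes f :: "nat \<Rightarrow> nat \<Rightarrow> nat \<Rightarrow> int \<Rightarrow> 'k::field_char_0"
  assumes g: "\<And>al be. al \<le> a \<Longrightarrow> be \<le> b \<Longrightarrow> (al,be) \<noteq> (a,b) \<Longrightarrow> good f al be"
  shows "Gf a b f \<in> Vsp"
proof -
  have A: "\<forall>i j. i > 0 \<longrightarrow> Gf a b f i j = 0" by (simp add: Gf_def)
  have B: "\<forall>j < - int b. \<forall>i. Gf a b f i j = 0" using Gf_supp[OF g] by fastforce
  have C: "finite {i. Gf a b f i j \<noteq> 0}" for j
  proof (rule finite_subset)
    show "{i. Gf a b f i j \<noteq> 0} \<subseteq> (\<Union>al\<in>{..a}. \<Union>be\<in>{..b}. (\<lambda>r. - (int r + int a - int al)) ` {r. (al,be) \<noteq> (a,b) \<and> f al be r (- j - int b + int be) \<noteq> 0})"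
    proof
      fix i assume "i \<in> {i. Gf a b f i j \<noteq> 0}"
      then obtain al be where s: "i \<le> 0" "al \<le> a" "be \<le> b" "(al,be) \<noteq> (a,b)" "a \<le> nat (-i) + al"
        "f al be (nat (-i) + al - a) (- j - int b + int be) \<noteq> 0"
        using Gf_supp[OF g] by blast
      have "i = - (int (nat (-i) + al - a) + int a - int al)" using s by simp
      then show "i \<in> (\<Union>al\<in>{..a}. \<Union>be\<in>{..b}. (\<lambda>r. - (int r + int a - int al)) ` {r. (al,be) \<noteq> (a,b) \<and> f al be r (- j - int b + int be) \<noteq> 0})"
        using s by blast
    qed
    show "finite (\<Union>al\<in>{..a}. \<Union>be\<in>{..b}. (\<lambda>r. - (int r + int a - int al)) ` {r. (al,be) \<noteq> (a,b) \<and> f al be r (- j - int b + int be) \<noteq> 0})"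
    proof (intro finite_UN_I finite_atMost finite_imageI)
      fix al be assume "al \<in> {..a}" "be \<in> {..b}"
      then show "finite {r. (al,be) \<noteq> (a,b) \<and> f al be r (- j - int b + int be) \<noteq> 0}"
      proof (cases "(al,be) = (a,b)")
        case False then show ?thesis using g[of al be] \<open>al \<in> {..a}\<close> \<open>be \<in> {..b}\<close> unfolding good_def by auto
      qed simp
    qed
  qed
  show ?thesis unfolding Vsp_def using A B C by blast
qed




definition Wproj :: "('k::field_char_0) ser2 set \<Rightarrow> 'k ser2 \<Rightarrow> 'k ser2" where
  "Wproj W x = (SOME w. w \<in> W \<and> (\<forall>i j. j \<le> 0 \<longrightarrow> w i j = x i j))"

definition stepW :: "('k::field_char_0) ser2 set \<Rightarrow> nat \<Rightarrow> nat \<Rightarrow> 'k ser2 \<Rightarrow> nat \<Rightarrow> int \<Rightarrow> 'k" where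
  "stepW W a b g = (\<lambda>r n. if n < 0 then (Wproj W (\<lambda>i j. dl a b i j + g i j) (- int r) (- n)
       - (dl a b (- int r) (- n) + g (- int r) (- n))) / (fact a * fact b) else 0)"

primrec layer :: "('k::field_char_0) ser2 set \<Rightarrow> nat \<Rightarrow> nat \<Rightarrow> nat \<Rightarrow> nat \<Rightarrow> int \<Rightarrow> 'k" where
  "layer W 0 = (\<lambda>_ _ _ _. 0)"
| "layer W (Suc N) = (\<lambda>al be. if al + be = N then stepW W al be (Gf al be (layer W N)) else layer W N al be)"

definition fW :: "('k::field_char_0) ser2 set \<Rightarrow> nat \<Rightarrow> nat \<Rightarrow> nat \<Rightarrow> int \<Rightarrow> 'k" where
  "fW W = (\<lambda>al be. layer W (Suc (al + be)) al be)"

lemma layer_stable: "al + be < N \<Longrightarrow> layer W N al be = fW W al be"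
proof (induction N)
  case 0 then show ?case by simp
next
  case (Suc N)
  show ?case
  proof (cases "al + be = N")
    case True then show ?thesis by (simp add: fW_def)
  next
    case False then show ?thesis using Suc by simp
  qed
qed

lemma fW_eq: "fW W a b = stepW W a b (Gf a b (fW W))"
proof -
  have "Gf a b (layer W (a + b)) = Gf a b (fW W)"
    by (rule Gf_cong, rule layer_stable, simp)
  then show ?thesis by (simp add: fW_def)
qed

lemma finite_neg_preimage:
  fixes v :: "('k::zero) ser2"
  assumes "v \<in> Vsp" shows "finite {r::nat. v (- int r) j \<noteq> 0}"
proof -
  have "{r::nat. v (- int r) j \<noteq> 0} = (\<lambda>r. - int r) -` {i. v i j \<noteq> 0}" by auto
  moreover have "finite ((\<lambda>r::nat. - int r) -` {i. v i j \<noteq> 0})"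
    using assms unfolding Vsp_def by (intro finite_vimageI) (auto simp: inj_on_def)
  ultimately show ?thesis by simp
qed

definition SW :: "('k::field_char_0) ser2 set \<Rightarrow> 'k op" where "SW W = E_add E_one (toOp (fW W))"

lemma quad_induct' [consumes 1, case_names base step]:
  fixes P :: "('k::zero) ser2 \<Rightarrow> bool" and x :: "'k ser2"
  assumes x: "x \<in> Vsp"
  and base: "\<And>x. x \<in> Vsp \<Longrightarrow> (\<forall>i j. x i j \<noteq> 0 \<longrightarrow> j > 0) \<Longrightarrow> P x"
  and step: "\<And>x i j. x \<in> Vsp \<Longrightarrow> i \<le> 0 \<Longrightarrow> j \<le> 0 \<Longrightarrow> ismin x i j \<Longrightarrow>
      (\<And>y. y \<in> Vsp \<Longrightarrow> (\<forall>i' j'. y i' j' \<noteq> 0 \<longrightarrow> j < j' \<or> (j = j' \<and> i < i')) \<Longrightarrow> P y) \<Longrightarrow> P x"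
  shows "P x"
  by (rule quad_induct[OF base step x])

context
  fixes W :: "('k::field_char_0) ser2 set"
  assumes WV: "W \<subseteq> Vsp" and Wsub: "subspace2 W" and WS: "Supp W = W0"
begin

lemma W_lin: "v \<in> W \<Longrightarrow> w \<in> W \<Longrightarrow> (\<lambda>i j. c * v i j + d * w i j) \<in> W"
proof -
  assume v: "v \<in> W" and w: "w \<in> W"
  have "(\<lambda>i j. c * v i j) \<in> W" "(\<lambda>i j. d * w i j) \<in> W" using Wsub v w unfolding subspace2_def by auto
  then show ?thesis using Wsub unfolding subspace2_def by fastforce
qed

lemma W_zero: "(\<lambda>_ _. 0) \<in> W" using Wsub unfolding subspace2_def by auto

lemma W_only_pos: "w \<in> W \<Longrightarrow> (\<forall>i j. w i j \<noteq> 0 \<longrightarrow> j > 0) \<Longrightarrow> w = (\<lambda>_ _. 0)"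
proof (rule ccontr)
  assume w: "w \<in> W" and pos: "\<forall>i j. w i j \<noteq> 0 \<longrightarrow> j > 0" and nz: "w \<noteq> (\<lambda>_ _. 0)"
  obtain i0 j0 where "w i0 j0 \<noteq> 0" using nonzero_ex[OF nz] by blast
  then obtain i j where m: "ismin w i j" using min_exists WV w by blast
  then have "j \<le> 0" using Supp_K1[OF WV WS w] by blast
  moreover have "w i j \<noteq> 0" using m by (simp add: ismin_def)
  ultimately show False using pos by force
qed

lemma decomp: "x \<in> Vsp \<Longrightarrow> \<exists>w\<in>W. \<forall>i j. j \<le> 0 \<longrightarrow> w i j = x i j"
proof (induction x rule: quad_induct')
  case (base x)
  note 1 = base
  show ?case
  proof (rule bexI[OF _ W_zero])
    show "\<forall>i j. j \<le> 0 \<longrightarrow> 0 = x i j" using 1(2) by (metis not_le)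
  qed
next
  case (step x i j)
  note 2 = step
  obtain w0 where w0: "w0 \<in> W" "ismin w0 i j" using Supp_K2[OF WV WS 2(2,3)] by blast
  define c where "c = x i j / w0 i j"
  define y where "y = (\<lambda>i j. 1 * x i j + (- c) * w0 i j)"
  have w0V: "w0 \<in> Vsp" using w0 WV by auto
  have yV: "y \<in> Vsp" unfolding y_def by (rule Vsp_lin[OF 2(1) w0V])
  have w0n: "w0 i j \<noteq> 0" using w0 by (simp add: ismin_def)
  have "\<forall>i' j'. y i' j' \<noteq> 0 \<longrightarrow> j < j' \<or> (j = j' \<and> i < i')"
  proof (intro allI impI)
    fix i' j' assume yn: "y i' j' \<noteq> 0"
    then have "x i' j' \<noteq> 0 \<or> w0 i' j' \<noteq> 0" by (auto simp: y_def)
    then have "j < j' \<or> (j = j' \<and> i \<le> i')" using 2(4) w0(2) by (auto simp: ismin_def)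
    moreover have "(i',j') \<noteq> (i,j)" using yn w0n by (auto simp: y_def c_def)
    ultimately show "j < j' \<or> (j = j' \<and> i < i')" by auto
  qed
  then obtain w' where w': "w' \<in> W" "\<forall>i j. j \<le> 0 \<longrightarrow> w' i j = y i j" using 2(5) yV by blast
  define w where "w = (\<lambda>i j. 1 * w' i j + c * w0 i j)"
  have "w \<in> W" unfolding w_def by (rule W_lin[OF w'(1) w0(1)])
  moreover have "\<forall>i j. j \<le> 0 \<longrightarrow> w i j = x i j" using w'(2) by (simp add: w_def y_def)
  ultimately show ?case by blast
qed

lemma Wproj: "x \<in> Vsp \<Longrightarrow> Wproj W x \<in> W \<and> (\<forall>i j. j \<le> 0 \<longrightarrow> Wproj W x i j = x i j)"
proof -
  assume "x \<in> Vsp"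
  then have "\<exists>w. w \<in> W \<and> (\<forall>i j. j \<le> 0 \<longrightarrow> w i j = x i j)" using decomp by blast
  then show ?thesis unfolding Wproj_def by (rule someI_ex)
qed

lemma good_fW: "good (fW W) a b"
proof -
  have "\<forall>a b. a + b = N \<longrightarrow> good (fW W) a b" for N
  proof (induction N rule: less_induct)
    case (less N)
    show ?case
    proof (intro allI impI)
      fix a b assume ab: "a + b = N"
      have lower: "good (fW W) al be" if "al \<le> a" "be \<le> b" "(al,be) \<noteq> (a,b)" for al be
        using less[of "al + be"] that ab by auto
      define x where "x = (\<lambda>i j. dl a b i j + Gf a b (fW W) i j)"
      have xV: "x \<in> Vsp" unfolding x_def
        using Vsp_lin[OF dl_Vsp[of a b] Gf_Vsp[OF lower], where c=1 and d=1] by simp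
      have pV: "Wproj W x \<in> Vsp" using Wproj[OF xV] WV by auto
      have st: "fW W a b = (\<lambda>r n. if n < 0 then (Wproj W x (- int r) (- n) - x (- int r) (- n)) / (fact a * fact b) else 0)"
        unfolding x_def by (subst fW_eq) (simp add: stepW_def)
      have "finite {r. fW W a b r n \<noteq> 0}" for n
      proof (rule finite_subset)
        show "{r. fW W a b r n \<noteq> 0} \<subseteq> {r. Wproj W x (- int r) (- n) \<noteq> 0} \<union> {r. x (- int r) (- n) \<noteq> 0}"
          using st by auto
        show "finite ({r. Wproj W x (- int r) (- n) \<noteq> 0} \<union> {r. x (- int r) (- n) \<noteq> 0})"
          using finite_neg_preimage[OF pV] finite_neg_preimage[OF xV] by blast
      qed
      moreover have "\<forall>r n. n \<ge> 0 \<longrightarrow> fW W a b r n = 0" using st by simp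
      ultimately show "good (fW W) a b" by (simp add: good_def)
    qed
  qed
  then show ?thesis by blast
qed


lemma U_eq: "monoU a b (SW W) = Wproj W (\<lambda>i j. dl a b i j + Gf a b (fW W) i j)"
proof -
  define x where "x = (\<lambda>i j. dl a b i j + Gf a b (fW W) i j)"
  have lower: "good (fW W) al be" for al be by (rule good_fW)
  have xV: "x \<in> Vsp" unfolding x_def
    using Vsp_lin[OF dl_Vsp[of a b] Gf_Vsp[OF lower], where c=1 and d=1] by simp
  have P: "Wproj W x \<in> W" "\<forall>i j. j \<le> 0 \<longrightarrow> Wproj W x i j = x i j" using Wproj[OF xV] by auto
  have pV: "Wproj W x \<in> Vsp" using P WV by auto
  have st: "fW W a b = (\<lambda>r n. if n < 0 then (Wproj W x (- int r) (- n) - x (- int r) (- n)) / (fact a * fact b) else 0)"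
    unfolding x_def by (subst fW_eq) (simp add: stepW_def)
  have "monoU a b (SW W) i j = Wproj W x i j" for i j
  proof (cases "i \<le> 0")
    case False
    then show ?thesis using pV unfolding Vsp_def by (simp add: SW_def monoU_def)
  next
    case True
    have "monoU a b (SW W) i j = x i j + topT a b (fW W) i j"
      by (simp add: SW_def mono_add_one mono_split x_def)
    also have "topT a b (fW W) i j = (if j > 0 then Wproj W x i j - x i j else 0)"
      using True by (simp add: topT_def st)
    finally show ?thesis using P(2) by (cases "j > 0") auto
  qed
  then show ?thesis by (auto simp: x_def)
qed

end




lemma W0_lin:
  fixes v w :: "('k::field) ser2"
  assumes "v \<in> W0" "w \<in> W0"
  shows "(\<lambda>i j. c * v i j + d * w i j) \<in> W0"
proof -
  have "{(i, j). c * v i j + d * w i j \<noteq> 0} \<subseteq> {(i, j). v i j \<noteq> 0} \<union> {(i, j). w i j \<noteq> 0}" by auto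
  moreover have "finite ({(i, j). v i j \<noteq> 0} \<union> {(i, j). w i j \<noteq> 0})" using assms unfolding W0_def by auto
  ultimately have "finite {(i, j). c * v i j + d * w i j \<noteq> 0}" by (rule finite_subset)
  moreover have "\<forall>i j. c * v i j + d * w i j \<noteq> 0 \<longrightarrow> i \<le> 0 \<and> j \<le> 0"
  proof (intro allI impI)
    fix i j assume "c * v i j + d * w i j \<noteq> 0"
    then have "v i j \<noteq> 0 \<or> w i j \<noteq> 0" by auto
    then show "i \<le> 0 \<and> j \<le> 0" using assms unfolding W0_def by blast
  qed
  ultimately show ?thesis unfolding W0_def by blast
qed

lemma zero_W0: "(\<lambda>_ _. 0) \<in> W0" unfolding W0_def by simp

lemma finite_Fv:
  fixes v :: "('k::zero) ser2"
  assumes "v \<in> W0" shows "finite {(a::nat, b::nat). v (- int a) (- int b) \<noteq> 0}"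
proof (rule finite_subset)
  show "{(a::nat, b::nat). v (- int a) (- int b) \<noteq> 0} \<subseteq> (\<lambda>(i,j). (nat (-i), nat (-j))) ` {(i, j). v i j \<noteq> 0}"
  proof
    fix p assume "p \<in> {(a::nat, b::nat). v (- int a) (- int b) \<noteq> 0}"
    then obtain a b where p: "p = (a,b)" "v (- int a) (- int b) \<noteq> 0" by auto
    then have "(- int a, - int b) \<in> {(i, j). v i j \<noteq> 0}" by simp
    moreover have "p = (\<lambda>(i,j). (nat (-i), nat (-j))) (- int a, - int b)" using p by simp
    ultimately show "p \<in> (\<lambda>(i,j). (nat (-i), nat (-j))) ` {(i, j). v i j \<noteq> 0}" by blast
  qed
  show "finite ((\<lambda>(i,j). (nat (-i), nat (-j))) ` {(i, j). v i j \<noteq> 0})"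
    using assms unfolding W0_def by auto
qed

lemma act_dl: "act (dl a b) Q = monoU a b Q"
proof (intro ext)
  fix i j
  have "act (dl a b) Q i j = (\<Sum>(a',b')\<in>{(a,b)}. dl a b (- int a') (- int b') * monoU a' b' Q i j)"
    by (rule act_eq[OF dl_W0]) (auto simp: dl_def split: if_splits)
  then show "act (dl a b) Q i j = monoU a b Q i j" by (simp add: dl_def)
qed

lemma sum_dl:
  fixes m :: "nat \<times> nat \<Rightarrow> 'k::field_char_0"
  assumes "finite F" "(a,b) \<in> F"
  shows "(\<Sum>p\<in>F. dl a b (- int (fst p)) (- int (snd p)) * m p) = m (a,b)"
proof -
  have "(\<Sum>p\<in>F. dl a b (- int (fst p)) (- int (snd p)) * m p) = (\<Sum>p\<in>F. if p = (a,b) then m p else 0)"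
    by (intro sum.cong refl) (auto simp: dl_def)
  also have "\<dots> = m (a,b)" using assms by (simp add: sum.delta')
  finally show ?thesis .
qed

lemma Sminus_toOp:
  fixes f :: "nat \<Rightarrow> nat \<Rightarrow> nat \<Rightarrow> int \<Rightarrow> 'k::field_char_0"
  assumes g: "\<And>a b. good f a b"
  shows "is_Sminus (toOp f)"
proof -
  have Z: "\<forall>q m. m \<ge> 0 \<longrightarrow> toOp f q m = (\<lambda>_ _. 0)"
    using g unfolding good_def toOp_def by (auto intro!: ext)
  have M: "\<exists>M. \<forall>m>M. \<forall>q. toOp f q m = (\<lambda>_ _. 0)" using Z by (intro exI[of _ "-1"]) auto
  have D: "is_D1hat (\<lambda>q. toOp f q m)" for m
    unfolding is_D1hat_def
  proof
    fix n
    define B where "B = (\<Union>i<n. \<Union>j<n. {q. f i j q m \<noteq> 0})"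
    have "finite B" unfolding B_def using g unfolding good_def by auto
    then obtain k where k: "B \<subseteq> {..<k}" by (auto simp: finite_nat_set_iff_bounded)
    have "\<forall>q\<ge>k. in_Mpow (toOp f q m) n"
    proof (intro allI impI)
      fix q assume "q \<ge> k"
      then have "q \<notin> B" using k by auto
      then show "in_Mpow (toOp f q m) n" unfolding in_Mpow_def toOp_def B_def by auto
    qed
    then show "\<exists>Q. \<forall>q\<ge>Q. in_Mpow (toOp f q m) n" by blast
  qed
  show ?thesis unfolding is_Sminus_def is_Eplus_def using Z M D by blast
qed

context
  fixes W :: "('k::field_char_0) ser2 set"
  assumes WV: "W \<subseteq> Vsp" and Wsub: "subspace2 W" and WS: "Supp W = W0"
begin

lemma U_in_W: "monoU a b (SW W) \<in> W"
proof -
  define x where "x = (\<lambda>i j. dl a b i j + Gf a b (fW W) i j)"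
  have lower: "good (fW W) al be" for al be by (rule good_fW[OF WV Wsub WS])
  have xV: "x \<in> Vsp" unfolding x_def
    using Vsp_lin[OF dl_Vsp[of a b] Gf_Vsp[OF lower], where c=1 and d=1] by simp
  show ?thesis using U_eq[OF WV Wsub WS, of a b] Wproj[OF WV Wsub WS xV] by (simp add: x_def)
qed

lemma sum_in_W: "finite F \<Longrightarrow> (\<forall>p\<in>F. g p \<in> W) \<Longrightarrow> (\<lambda>i j. \<Sum>p\<in>F. c p * g p i j) \<in> W"
proof (induction F rule: finite_induct)
  case empty then show ?case using W_zero[OF WV Wsub WS] by simp
next
  case (insert p F)
  have "(\<lambda>i j. 1 * (\<Sum>p\<in>F. c p * g p i j) + c p * g p i j) \<in> W"
    using insert by (intro W_lin[OF WV Wsub WS]) auto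
  then show ?case using insert by (simp add: add.commute)
qed

lemma image_sub: "v \<in> W0 \<Longrightarrow> act v (SW W) \<in> W"
proof -
  assume v: "v \<in> W0"
  define F where "F = {(a::nat, b::nat). v (- int a) (- int b) \<noteq> 0}"
  have fF: "finite F" unfolding F_def by (rule finite_Fv[OF v])
  have "act v (SW W) = (\<lambda>i j. \<Sum>p\<in>F. v (- int (fst p)) (- int (snd p)) * monoU (fst p) (snd p) (SW W) i j)"
    by (intro ext, subst act_eq[OF v fF]) (auto simp: F_def split_def)
  also have "\<dots> \<in> W" using fF U_in_W by (intro sum_in_W) auto
  finally show ?thesis .
qed

lemma U_props:
  shows "monoU a b (SW W) (- int a) (- int b) = 1"
    and "monoU a b (SW W) i' j' \<noteq> 0 \<Longrightarrow> (i', j') \<noteq> (- int a, - int b) \<Longrightarrow> j' > - int b"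
proof -
  have g: "good (fW W) al be" for al be by (rule good_fW[OF WV Wsub WS])
  have U: "monoU a b (SW W) i j = dl a b i j + (Gf a b (fW W) i j + topT a b (fW W) i j)" for i j
    by (simp add: SW_def mono_add_one mono_split)
  have G: "Gf a b (fW W) i j \<noteq> 0 \<Longrightarrow> j > - int b" for i j using Gf_supp[OF g] by blast
  have T: "topT a b (fW W) i j \<noteq> 0 \<Longrightarrow> j > 0" for i j
  proof -
    assume "topT a b (fW W) i j \<noteq> 0"
    then have "fW W a b (nat (-i)) (-j) \<noteq> 0" by (auto simp: topT_def split: if_splits)
    then show "j > 0" using g[of a b] unfolding good_def by (meson neg_0_le_iff_le not_le)
  qed
  have "Gf a b (fW W) (- int a) (- int b) = 0" using G by fastforce
  moreover have "topT a b (fW W) (- int a) (- int b) = 0" using T by fastforce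
  ultimately show "monoU a b (SW W) (- int a) (- int b) = 1" using U by (simp add: dl_def)
  assume nz: "monoU a b (SW W) i' j' \<noteq> 0" and ne: "(i', j') \<noteq> (- int a, - int b)"
  then have "Gf a b (fW W) i' j' \<noteq> 0 \<or> topT a b (fW W) i' j' \<noteq> 0" using U[of i' j'] by (auto simp: dl_def)
  then show "j' > - int b" using G T by force
qed

lemma W_sub_image: "w \<in> Vsp \<Longrightarrow> w \<in> W \<longrightarrow> (\<exists>v\<in>W0. w = act v (SW W))"
proof (induction w rule: quad_induct')
  case (base x)
  show ?case
  proof
    assume "x \<in> W"
    then have "x = (\<lambda>_ _. 0)" using W_only_pos[OF WV Wsub WS] base by blast
    moreover have "act (\<lambda>_ _. 0) (SW W) = (\<lambda>_ _. 0)"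
      by (intro ext, subst act_eq[OF zero_W0, of "{}"]) auto
    ultimately show "\<exists>v\<in>W0. x = act v (SW W)" using zero_W0 by metis
  qed
next
  case (step x i j)
  show ?case
  proof
    assume xW: "x \<in> W"
    define a where "a = nat (-i)"
    define b where "b = nat (-j)"
    have ia: "i = - int a" "j = - int b" using step(2,3) by (auto simp: a_def b_def)
    define U where "U = monoU a b (SW W)"
    have UW: "U \<in> W" unfolding U_def by (rule U_in_W)
    have U1: "U i j = 1" unfolding U_def ia by (rule U_props(1))
    have U2: "U i' j' \<noteq> 0 \<Longrightarrow> (i', j') \<noteq> (i, j) \<Longrightarrow> j' > j" for i' j'
      unfolding U_def ia by (rule U_props(2))
    define c where "c = x i j"
    define y where "y = (\<lambda>i j. 1 * x i j + (- c) * U i j)"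
    have yW: "y \<in> W" unfolding y_def by (rule W_lin[OF WV Wsub WS xW UW])
    have yV: "y \<in> Vsp" using yW WV by auto
    have "\<forall>i' j'. y i' j' \<noteq> 0 \<longrightarrow> j < j' \<or> (j = j' \<and> i < i')"
    proof (intro allI impI)
      fix i' j' assume yn: "y i' j' \<noteq> 0"
      have ne: "(i',j') \<noteq> (i,j)" using yn U1 by (auto simp: y_def c_def)
      have "x i' j' \<noteq> 0 \<or> U i' j' \<noteq> 0" using yn by (auto simp: y_def)
      then show "j < j' \<or> (j = j' \<and> i < i')"
      proof
        assume "x i' j' \<noteq> 0"
        then have "j < j' \<or> (j = j' \<and> i \<le> i')" using step(4) by (auto simp: ismin_def)
        then show ?thesis using ne by auto
      next
        assume "U i' j' \<noteq> 0" then show ?thesis using U2 ne by auto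
      qed
    qed
    then obtain v' where v': "v' \<in> W0" "y = act v' (SW W)" using step(5)[OF yV] yW by blast
    define v where "v = (\<lambda>i j. 1 * v' i j + c * dl a b i j)"
    have vW0: "v \<in> W0" unfolding v_def by (rule W0_lin[OF v'(1) dl_W0])
    define F where "F = {(a::nat, b::nat). v' (- int a) (- int b) \<noteq> 0} \<union> {(a,b)}"
    have fF: "finite F" unfolding F_def using finite_Fv[OF v'(1)] by simp
    have "act v (SW W) i' j' = x i' j'" for i' j'
    proof -
      have "act v (SW W) i' j' = (\<Sum>p\<in>F. v (- int (fst p)) (- int (snd p)) * monoU (fst p) (snd p) (SW W) i' j')"
      proof -
        have prem: "\<And>a' b'. v (- int a') (- int b') \<noteq> 0 \<Longrightarrow> (a',b') \<in> F"
          by (auto simp: F_def v_def dl_def split: if_splits)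
        show ?thesis using act_eq[OF vW0 fF prem, of "SW W" i' j'] by (simp add: split_def)
      qed
      also have "\<dots> = (\<Sum>p\<in>F. v' (- int (fst p)) (- int (snd p)) * monoU (fst p) (snd p) (SW W) i' j')
          + c * (\<Sum>p\<in>F. dl a b (- int (fst p)) (- int (snd p)) * monoU (fst p) (snd p) (SW W) i' j')"
        by (simp add: v_def sum.distrib sum_distrib_left algebra_simps)
      also have "(\<Sum>p\<in>F. dl a b (- int (fst p)) (- int (snd p)) * monoU (fst p) (snd p) (SW W) i' j') = U i' j'"
        using sum_dl[OF fF, of a b "\<lambda>p. monoU (fst p) (snd p) (SW W) i' j'"] by (simp add: F_def U_def)
      also have "(\<Sum>p\<in>F. v' (- int (fst p)) (- int (snd p)) * monoU (fst p) (snd p) (SW W) i' j') = act v' (SW W) i' j'"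
      proof -
        have prem: "\<And>a' b'. v' (- int a') (- int b') \<noteq> 0 \<Longrightarrow> (a',b') \<in> F"
          by (auto simp: F_def)
        show ?thesis using act_eq[OF v'(1) fF prem, of "SW W" i' j'] by (simp add: split_def)
      qed
      also have "act v' (SW W) i' j' = y i' j'" using v'(2) by simp
      finally show ?thesis by (simp add: y_def)
    qed
    then have "x = act v (SW W)" by (intro ext) simp
    then show "\<exists>v\<in>W0. x = act v (SW W)" using vW0 by blast
  qed
qed

lemma uniq:
  assumes Sm: "is_Sminus Sm" and img: "(\<lambda>v. act v (E_add E_one Sm)) ` W0 = W"
  shows "Sm = toOp (fW W)"
proof -
  define f where "f = (\<lambda>al be r n. Sm r n al be)"
  have Smf: "Sm = toOp f" unfolding f_def toOp_def by (intro ext) (rule refl)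
  have fz: "n \<ge> 0 \<Longrightarrow> f a b r n = 0" for a b r n
  proof -
    assume "n \<ge> 0"
    moreover have "\<forall>q m. m \<ge> 0 \<longrightarrow> Sm q m = (\<lambda>_ _. 0)" using Sm unfolding is_Sminus_def by (rule conjunct2)
    ultimately have "Sm r n = (\<lambda>_ _. 0)" by blast
    then show ?thesis by (simp add: f_def)
  qed
  have gW: "good (fW W) al be" for al be by (rule good_fW[OF WV Wsub WS])
  have "\<forall>a b. a + b = N \<longrightarrow> f a b = fW W a b" for N
  proof (induction N rule: less_induct)
    case (less N)
    show ?case
    proof (intro allI impI)
      fix a b assume ab: "a + b = N"
      have GG: "Gf a b f = Gf a b (fW W)"
      proof (rule Gf_cong)
        fix al be assume "al \<le> a" "be \<le> b" "al + be < a + b"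
        then show "f al be = fW W al be" using less[of "al + be"] ab by blast
      qed
      have m1: "monoU a b (E_add E_one Sm) \<in> W"
      proof -
        have "act (dl a b) (E_add E_one Sm) \<in> (\<lambda>v. act v (E_add E_one Sm)) ` W0"
          by (rule imageI[OF dl_W0])
        then show ?thesis using img by (simp add: act_dl)
      qed
      define d where "d = (\<lambda>i j. 1 * monoU a b (E_add E_one Sm) i j + (-1) * monoU a b (SW W) i j)"
      have dW: "d \<in> W" unfolding d_def by (rule W_lin[OF WV Wsub WS m1 U_in_W])
      have dE: "d i j = topT a b f i j - topT a b (fW W) i j" for i j
        by (simp add: d_def SW_def mono_add_one mono_split Smf GG)
      have "\<forall>i j. d i j \<noteq> 0 \<longrightarrow> j > 0"
      proof (intro allI impI)
        fix i j assume "d i j \<noteq> 0"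
        then have "f a b (nat (-i)) (-j) \<noteq> 0 \<or> fW W a b (nat (-i)) (-j) \<noteq> 0"
          using dE[of i j] by (auto simp: topT_def split: if_splits)
        then show "j > 0"
        proof (rule contrapos_pp)
          assume "\<not> j > 0"
          then have "- j \<ge> 0" by simp
          then show "\<not> (f a b (nat (-i)) (-j) \<noteq> 0 \<or> fW W a b (nat (-i)) (-j) \<noteq> 0)"
            using fz[of "-j" a b "nat (-i)"] gW[of a b] unfolding good_def by simp
        qed
      qed
      then have d0: "d = (\<lambda>_ _. 0)" by (rule W_only_pos[OF WV Wsub WS dW])
      show "f a b = fW W a b"
      proof (intro ext)
        fix r n
        have "d (- int r) (- n) = 0" using d0 by simp
        then have "fact a * fact b * (f a b r n - fW W a b r n) = (0::'k)"
          using dE[of "- int r" "- n"] by (simp add: topT_def algebra_simps)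
        then show "f a b r n = fW W a b r n" by simp
      qed
    qed
  qed
  then have "f a b = fW W a b" for a b by blast
  then have "f = fW W" by (intro ext) simp
  then show ?thesis using Smf by simp
qed

end



theorem theorem1:
  fixes W :: "('k::field_char_0) ser2 set"
  assumes "W \<subseteq> Vsp" and "subspace2 W" and "closed2 W" and "Supp W = W0"
  shows "\<exists>!S. (\<exists>Sm. is_Sminus Sm \<and> S = E_add E_one Sm) \<and> (\<lambda>v. act v S) ` W0 = W"
proof (rule ex1I)
  note WV = assms(1) and Wsub = assms(2) and WS = assms(4)
  have sm: "is_Sminus (toOp (fW W))" by (rule Sminus_toOp, rule good_fW[OF WV Wsub WS])
  have "(\<lambda>v. act v (SW W)) ` W0 = W"
  proof
    show "(\<lambda>v. act v (SW W)) ` W0 \<subseteq> W" using image_sub[OF WV Wsub WS] by blast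
    show "W \<subseteq> (\<lambda>v. act v (SW W)) ` W0"
    proof
      fix w assume w: "w \<in> W"
      then obtain v where "v \<in> W0" "w = act v (SW W)"
        using W_sub_image[OF WV Wsub WS, of w] WV by blast
      then show "w \<in> (\<lambda>v. act v (SW W)) ` W0" by blast
    qed
  qed
  then show "(\<exists>Sm. is_Sminus Sm \<and> SW W = E_add E_one Sm) \<and> (\<lambda>v. act v (SW W)) ` W0 = W"
    using sm by (auto simp: SW_def)
  fix S assume "(\<exists>Sm. is_Sminus Sm \<and> S = E_add E_one Sm) \<and> (\<lambda>v. act v S) ` W0 = W"
  then obtain Sm where "is_Sminus Sm" "S = E_add E_one Sm" "(\<lambda>v. act v (E_add E_one Sm)) ` W0 = W" by blast
  then show "S = SW W" using uniq[OF WV Wsub WS] by (simp add: SW_def)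
qed


end
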